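(* Let $k\geq 1$ be a fixed integer, $p=\frac{\log n+(k+1)\log\log n-\log\log\log n}{n}$, $G=G(n,p)$ and $D=\frac{\log n}{\log\log n}$. For a fixed $t\in\mathbb{N}$ and a fixed $0<\alpha<1$, almost surely there does not exist a subset $S\subset V(G)$ with $|S|\leq \alpha tD$ and $e[S]\geq |S|+t$.
   Context: $\log$ is the natural logarithm; $G(n,p)$ is the binomial random graph on $n$ vertices, $n\to\infty$; "almost surely" means with probability tending to $1$; $e[S]$ denotes the number of edges of the subgraph of $G$ induced by $S$. *)

theory Defs
  imports Complex_Main
begin

definition all_edges :: "nat \<Rightarrow> nat set set" where
  "all_edges n = {e. \<exists>i j. i < j \<and> j < n \<and> e = {i, j}}"

text \<open>Probability that the binomial random graph G(n,p) (edge set E) satisfies property P: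
  each of the n choose 2 possible edges is present independently with probability p.\<close>
definition Gnp_prob :: "nat \<Rightarrow> real \<Rightarrow> (nat set set \<Rightarrow> bool) \<Rightarrow> real" where
  "Gnp_prob n p P =
     (\<Sum>E\<in>Pow (all_edges n). if P E
        then p ^ card E * (1 - p) ^ (card (all_edges n) - card E) else 0)"

definition induced_edges :: "nat set set \<Rightarrow> nat set \<Rightarrow> nat" where
  "induced_edges E S = card {e \<in> E. e \<subseteq> S}"

end

theory Submission
  imports Defs "HOL-Real_Asymp.Real_Asymp"
begin

lemma sum_pow_binom:
  fixes p q :: real
  assumes "finite B"
  shows "(\<Sum>E\<in>Pow B. p ^ card E * q ^ (card B - card E)) = (p + q) ^ card B"
  using assms
proof (induction B rule: finite_induct)
  case empty then show ?case by simp
next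
  case (insert x B)
  let ?S = "(\<Sum>E\<in>Pow B. p ^ card E * q ^ (card B - card E))"
  have fin: "\<And>E. E \<in> Pow B \<Longrightarrow> finite E" using insert(1) finite_subset by auto
  have le: "\<And>E. E \<in> Pow B \<Longrightarrow> card E \<le> card B" using insert(1) card_mono by auto
  have inj: "inj_on (insert x) (Pow B)" unfolding inj_on_def using insert(2) by (metis PowD insert_ident subsetD)
  have disj: "Pow B \<inter> insert x ` Pow B = {}" using insert(2) by auto
  have cB: "card (insert x B) = Suc (card B)" using insert by simp
  have "(\<Sum>E\<in>Pow (insert x B). p ^ card E * q ^ (card (insert x B) - card E))
     = (\<Sum>E\<in>Pow B. p ^ card E * q ^ (card (insert x B) - card E))
       + (\<Sum>E\<in>insert x ` Pow B. p ^ card E * q ^ (card (insert x B) - card E))"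
    unfolding Pow_insert using insert(1) disj by (intro sum.union_disjoint) auto
  also have "(\<Sum>E\<in>Pow B. p ^ card E * q ^ (card (insert x B) - card E)) = q * ?S"
    unfolding sum_distrib_left cB
    by (rule sum.cong) (auto simp: Suc_diff_le le)
  also have "(\<Sum>E\<in>insert x ` Pow B. p ^ card E * q ^ (card (insert x B) - card E))
      = (\<Sum>E\<in>Pow B. p ^ card (insert x E) * q ^ (card (insert x B) - card (insert x E)))"
    using inj by (simp add: sum.reindex)
  also have "\<dots> = p * ?S"
    unfolding sum_distrib_left cB
  proof (rule sum.cong)
    fix E assume E: "E \<in> Pow B"
    then have "x \<notin> E" using insert(2) by auto
    then have "card (insert x E) = Suc (card E)" using fin[OF E] by simp
    then show "p ^ card (insert x E) * q ^ (Suc (card B) - card (insert x E)) = p * (p ^ card E * q ^ (card B - card E))"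
      by simp
  qed simp
  finally show ?case using insert by (simp add: cB algebra_simps)
qed

lemma superset_sum:
  fixes p :: real
  assumes "finite A" "F \<subseteq> A"
  shows "(\<Sum>E\<in>Pow A. if F \<subseteq> E then p ^ card E * (1-p)^(card A - card E) else 0) = p ^ card F"
proof -
  have fF: "finite F" using assms finite_subset by auto
  have "(\<Sum>E\<in>Pow A. if F \<subseteq> E then p ^ card E * (1-p)^(card A - card E) else 0)
      = (\<Sum>E\<in>{E\<in>Pow A. F \<subseteq> E}. p ^ card E * (1-p)^(card A - card E))"
    by (rule sum.inter_filter[symmetric]) (simp add: assms(1))
  also have set: "{E\<in>Pow A. F \<subseteq> E} = (\<lambda>E'. F \<union> E') ` Pow (A - F)"
  proof
    show "{E\<in>Pow A. F \<subseteq> E} \<subseteq> (\<lambda>E'. F \<union> E') ` Pow (A - F)"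
    proof
      fix E assume "E \<in> {E\<in>Pow A. F \<subseteq> E}"
      then have "E = F \<union> (E - F)" "E - F \<in> Pow (A - F)" by auto
      then show "E \<in> (\<lambda>E'. F \<union> E') ` Pow (A - F)" by blast
    qed
  qed (use assms in auto)
  also have inj: "inj_on (\<lambda>E'. F \<union> E') (Pow (A - F))" unfolding inj_on_def by blast
  have "(\<Sum>E\<in>(\<lambda>E'. F \<union> E') ` Pow (A - F). p ^ card E * (1-p)^(card A - card E))
      = (\<Sum>E'\<in>Pow (A - F). p ^ card (F \<union> E') * (1-p)^(card A - card (F \<union> E')))"
    using inj by (simp add: sum.reindex)
  also have "\<dots> = (\<Sum>E'\<in>Pow (A - F). p ^ card F * (p ^ card E' * (1-p)^(card (A - F) - card E')))"
  proof (rule sum.cong)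
    fix E' assume E': "E' \<in> Pow (A - F)"
    have fE: "finite E'" using E' assms(1) finite_subset by auto
    have c1: "card (F \<union> E') = card F + card E'"
      using E' fF fE by (intro card_Un_disjoint) auto
    have c2: "card (A - F) = card A - card F" using assms by (simp add: card_Diff_subset fF)
    show "p ^ card (F \<union> E') * (1-p)^(card A - card (F \<union> E')) = p ^ card F * (p ^ card E' * (1-p)^(card (A - F) - card E'))"
      unfolding c1 c2 by (simp add: power_add)
  qed simp
  also have "\<dots> = p ^ card F"
    unfolding sum_distrib_left[symmetric] using sum_pow_binom[of "A - F" p "1 - p"] assms(1) by simp
  finally show ?thesis .
qed

lemma finite_all_edges: "finite (all_edges n)"
proof -
  have "all_edges n \<subseteq> Pow {0..<n}" unfolding all_edges_def by auto
  then show ?thesis using finite_subset by blast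
qed

lemma gnp_nonneg: "0 \<le> p \<Longrightarrow> p \<le> 1 \<Longrightarrow> 0 \<le> Gnp_prob n p P"
  unfolding Gnp_prob_def by (intro sum_nonneg) auto

lemma gnp_mono:
  assumes "0 \<le> p" "p \<le> 1" "\<And>E. E \<subseteq> all_edges n \<Longrightarrow> P E \<Longrightarrow> Q E"
  shows "Gnp_prob n p P \<le> Gnp_prob n p Q"
  unfolding Gnp_prob_def using assms by (intro sum_mono) auto

lemma gnp_union:
  assumes "finite I" "0 \<le> p" "p \<le> 1"
  shows "Gnp_prob n p (\<lambda>E. \<exists>i\<in>I. P i E) \<le> (\<Sum>i\<in>I. Gnp_prob n p (P i))"
proof -
  define w :: "nat set set \<Rightarrow> real" where "w E = p ^ card E * (1 - p) ^ (card (all_edges n) - card E)" for E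
  have w0: "0 \<le> w E" for E unfolding w_def using assms by simp
  have "(\<Sum>i\<in>I. Gnp_prob n p (P i)) = (\<Sum>E\<in>Pow (all_edges n). \<Sum>i\<in>I. if P i E then w E else 0)"
    unfolding Gnp_prob_def w_def by (rule sum.swap)
  moreover have "Gnp_prob n p (\<lambda>E. \<exists>i\<in>I. P i E) \<le> (\<Sum>E\<in>Pow (all_edges n). \<Sum>i\<in>I. if P i E then w E else 0)"
    unfolding Gnp_prob_def w_def[symmetric]
  proof (rule sum_mono)
    fix E
    show "(if \<exists>i\<in>I. P i E then w E else 0) \<le> (\<Sum>i\<in>I. if P i E then w E else 0)"
    proof (cases "\<exists>i\<in>I. P i E")
      case True
      then obtain i where i: "i \<in> I" "P i E" by blast
      have "(if P i E then w E else 0) \<le> (\<Sum>i\<in>I. if P i E then w E else 0)"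
        by (rule member_le_sum) (use i assms w0 in auto)
      then show ?thesis using i True by simp
    next
      case False then show ?thesis using w0 by (simp add: sum_nonneg)
    qed
  qed
  ultimately show ?thesis by simp
qed

lemma gnp_superset: "F \<subseteq> all_edges n \<Longrightarrow> Gnp_prob n p (\<lambda>E. F \<subseteq> E) = p ^ card F"
  unfolding Gnp_prob_def by (rule superset_sum[OF finite_all_edges])

lemma card_ed:
  assumes "finite S"
  shows "card {e\<in>all_edges n. e \<subseteq> S} \<le> card S * card S"
proof -
  have "{e\<in>all_edges n. e \<subseteq> S} \<subseteq> (\<lambda>(i,j). {i,j}) ` (S \<times> S)"
    unfolding all_edges_def by auto
  then have "card {e\<in>all_edges n. e \<subseteq> S} \<le> card ((\<lambda>(i,j). {i,j}) ` (S \<times> S))"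
    using assms by (intro card_mono) auto
  also have "\<dots> \<le> card (S \<times> S)" using assms by (intro card_image_le) auto
  finally show ?thesis by (simp add: card_cartesian_product)
qed

lemma event_incl:
  assumes EA: "E \<subseteq> all_edges n" and S: "S \<subseteq> {0..<n}" "real (card S) \<le> B" "induced_edges E S \<ge> card S + t"
  shows "\<exists>s\<in>{..nat \<lfloor>B\<rfloor>}. \<exists>S\<in>{S. S \<subseteq> {0..<n} \<and> card S = s}.
          \<exists>F\<in>{F. F \<subseteq> {e\<in>all_edges n. e \<subseteq> S} \<and> card F = s + t}. F \<subseteq> E"
proof -
  have sb: "card S \<in> {..nat \<lfloor>B\<rfloor>}" using le_nat_floor[OF S(2)] by simp
  have cS: "card S + t \<le> card {e \<in> E. e \<subseteq> S}" using S(3) unfolding induced_edges_def .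
  obtain F where F: "F \<subseteq> {e \<in> E. e \<subseteq> S}" "card F = card S + t"
    by (rule obtain_subset_with_card_n[OF cS])
  have sub: "{e \<in> E. e \<subseteq> S} \<subseteq> {e\<in>all_edges n. e \<subseteq> S}" using EA by auto
  have F1: "F \<in> {F. F \<subseteq> {e\<in>all_edges n. e \<subseteq> S} \<and> card F = card S + t}"
    using subset_trans[OF F(1) sub] F(2) by simp
  have S1: "S \<in> {S'. S' \<subseteq> {0..<n} \<and> card S' = card S}" using S by simp
  have F2: "F \<subseteq> E" using F(1) by auto
  show ?thesis
    apply (rule bexI[OF _ sb])
    apply (rule bexI[OF _ S1])
    apply (rule bexI[OF _ F1])
    apply (rule F2)
    done
qed

lemma comb_bound:
  assumes p0: "0 \<le> p" and p1: "p \<le> 1" and B0: "0 \<le> B"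
  shows "Gnp_prob n p (\<lambda>E. \<exists>S. S \<subseteq> {0..<n} \<and> real (card S) \<le> B \<and> induced_edges E S \<ge> card S + t)
     \<le> (\<Sum>s\<le>nat \<lfloor>B\<rfloor>. real (n choose s) * real ((s*s) choose (s+t)) * p^(s+t))"
proof -
  define b where "b = nat \<lfloor>B\<rfloor>"
  define ed where "ed S = {e\<in>all_edges n. e \<subseteq> S}" for S
  define SS where "SS s = {S. S \<subseteq> {0..<n} \<and> card S = s}" for s
  define FF where "FF S s = {F. F \<subseteq> ed S \<and> card F = s + t}" for S s
  have finSS: "finite (SS s)" for s
    by (rule finite_subset[of _ "Pow {0..<n}"]) (auto simp: SS_def)
  have fined: "finite (ed S)" for S
    unfolding ed_def using finite_all_edges by auto
  have finFF: "finite (FF S s)" for S s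
    by (rule finite_subset[of _ "Pow (ed S)"]) (auto simp: FF_def fined)
  have "Gnp_prob n p (\<lambda>E. \<exists>S. S \<subseteq> {0..<n} \<and> real (card S) \<le> B \<and> induced_edges E S \<ge> card S + t)
     \<le> Gnp_prob n p (\<lambda>E. \<exists>s\<in>{..b}. \<exists>S\<in>SS s. \<exists>F\<in>FF S s. F \<subseteq> E)"
  proof (rule gnp_mono[OF p0 p1])
    fix E assume EA: "E \<subseteq> all_edges n"
      and "\<exists>S. S \<subseteq> {0..<n} \<and> real (card S) \<le> B \<and> induced_edges E S \<ge> card S + t"
    then obtain S where S: "S \<subseteq> {0..<n}" "real (card S) \<le> B" "induced_edges E S \<ge> card S + t"
      by auto
    show "\<exists>s\<in>{..b}. \<exists>S\<in>SS s. \<exists>F\<in>FF S s. F \<subseteq> E"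
      using event_incl[OF EA S] unfolding SS_def FF_def ed_def b_def .
  qed
  also have "\<dots> \<le> (\<Sum>s\<in>{..b}. Gnp_prob n p (\<lambda>E. \<exists>S\<in>SS s. \<exists>F\<in>FF S s. F \<subseteq> E))"
    by (rule gnp_union) (use p0 p1 in auto)
  also have "\<dots> \<le> (\<Sum>s\<le>b. real (n choose s) * real ((s*s) choose (s+t)) * p^(s+t))"
  proof (rule sum_mono)
    fix s assume "s \<in> {..b}"
    have "Gnp_prob n p (\<lambda>E. \<exists>S\<in>SS s. \<exists>F\<in>FF S s. F \<subseteq> E)
        \<le> (\<Sum>S\<in>SS s. Gnp_prob n p (\<lambda>E. \<exists>F\<in>FF S s. F \<subseteq> E))"
      by (rule gnp_union) (use p0 p1 finSS in auto)
    also have "\<dots> \<le> (\<Sum>S\<in>SS s. real ((s*s) choose (s+t)) * p^(s+t))"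
    proof (rule sum_mono)
      fix S assume S: "S \<in> SS s"
      have fS: "finite S" using S unfolding SS_def using finite_subset by blast
      have "Gnp_prob n p (\<lambda>E. \<exists>F\<in>FF S s. F \<subseteq> E) \<le> (\<Sum>F\<in>FF S s. Gnp_prob n p (\<lambda>E. F \<subseteq> E))"
        by (rule gnp_union) (use p0 p1 finFF in auto)
      also have "\<dots> = (\<Sum>F\<in>FF S s. p^(s+t))"
      proof (rule sum.cong)
        fix F assume "F \<in> FF S s"
        then have "F \<subseteq> all_edges n" "card F = s + t" unfolding FF_def ed_def by auto
        then show "Gnp_prob n p (\<lambda>E. F \<subseteq> E) = p^(s+t)" using gnp_superset[of F n p] by simp
      qed simp
      also have "\<dots> = real (card (FF S s)) * p^(s+t)" by simp
      also have "\<dots> \<le> real ((s*s) choose (s+t)) * p^(s+t)"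
      proof -
        have c1: "card (FF S s) = card (ed S) choose (s + t)"
          unfolding FF_def by (rule n_subsets[OF fined])
        have c0: "card (ed S) \<le> s * s"
          using card_ed[OF fS, of n] S unfolding ed_def SS_def by simp
        have "card (ed S) choose (s + t) \<le> (s*s) choose (s+t)"
          by (rule binomial_right_mono[OF c0])
        then show ?thesis unfolding c1 using p0 by (intro mult_right_mono) auto
      qed
      finally show "Gnp_prob n p (\<lambda>E. \<exists>F\<in>FF S s. F \<subseteq> E) \<le> real ((s*s) choose (s+t)) * p^(s+t)" .
    qed
    also have "\<dots> = real (card (SS s)) * (real ((s*s) choose (s+t)) * p^(s+t))" by simp
    also have "\<dots> = real (n choose s) * real ((s*s) choose (s+t)) * p^(s+t)"
      unfolding SS_def using n_subsets[of "{0..<n}" s] by simp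
    finally show "Gnp_prob n p (\<lambda>E. \<exists>S\<in>SS s. \<exists>F\<in>FF S s. F \<subseteq> E)
        \<le> real (n choose s) * real ((s*s) choose (s+t)) * p^(s+t)" by simp
  qed
  finally show ?thesis unfolding b_def .
qed

lemma choose_le_pow_fact: "real (n choose r) \<le> real n ^ r / fact r"
proof (cases "r \<le> n")
  case True
  have d: "fact (n - r) dvd (fact n :: nat)" by (rule fact_dvd) simp
  have "fact r * real (n choose r) = fact n / fact (n - r)" by (rule fact_binomial[OF True])
  also have "\<dots> = real (fact n div fact (n - r))"
    using d by (simp add: real_of_nat_div)
  also have "\<dots> \<le> real (n ^ r)" using fact_div_fact_le_pow[OF True] by linarith
  finally have "fact r * real (n choose r) \<le> real n ^ r" by simp
  then show ?thesis by (simp add: field_simps)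
next
  case False
  then show ?thesis by (simp add: binomial_eq_0)
qed

lemma pow_fact_le_exp:
  fixes x :: real
  assumes "0 \<le> x"
  shows "x ^ n / fact n \<le> exp x"
proof -
  have s: "(\<lambda>k. x ^ k / fact k) sums exp x"
    using exp_converges[of x] by (simp add: divide_inverse_commute)
  have "(\<Sum>k\<in>{n}. x ^ k / fact k) \<le> (\<Sum>k. x ^ k / fact k)"
    by (rule sum_le_suminf) (use s assms in \<open>auto simp: sums_iff\<close>)
  then show ?thesis using s by (simp add: sums_iff)
qed

lemma term_bound:
  fixes p :: real
  assumes p0: "0 \<le> p"
  shows "real (n choose s) * real ((s*s) choose (s+t)) * p^(s+t) \<le> (exp 2 * n * p)^s * (p * s)^t"
proof -
  have a: "real (n choose s) \<le> real n ^ s / fact s" by (rule choose_le_pow_fact)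
  have b: "real ((s*s) choose (s+t)) \<le> real (s*s) ^ (s+t) / fact (s+t)" by (rule choose_le_pow_fact)
  have "real (n choose s) * real ((s*s) choose (s+t)) * p^(s+t)
     \<le> (real n ^ s / fact s) * (real (s*s) ^ (s+t) / fact (s+t)) * p^(s+t)"
    using a b p0 by (intro mult_mono mult_right_mono) auto
  also have "\<dots> = real n ^ s * (real s ^ s / fact s) * (real s ^ (s+t) / fact (s+t)) * real s ^ t * p^s * p^t"
    by (simp add: power_add power_mult_distrib)
  also have "\<dots> \<le> real n ^ s * exp (real s) * exp (real s) * real s ^ t * p^s * p^t"
    using pow_fact_le_exp[of "real s" s] pow_fact_le_exp[of "real s" "s+t"] p0
    by (intro mult_mono mult_right_mono mult_left_mono) auto
  also have "\<dots> = (exp 2 * n * p)^s * (p * s)^t"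
  proof -
    have "exp (real s) * exp (real s) = exp 2 ^ s"
      by (simp add: exp_add[symmetric] exp_of_nat_mult[symmetric])
    then show ?thesis by (simp add: power_mult_distrib algebra_simps)
  qed
  finally show ?thesis .
qed

lemma sum_geo_bound:
  fixes c p :: real
  assumes "1 \<le> c" "0 \<le> p"
  shows "(\<Sum>s\<le>b. c^s * (p * real s)^t) \<le> (real b + 1) * c^b * (p * real b)^t"
proof -
  have "(\<Sum>s\<le>b. c^s * (p * real s)^t) \<le> (\<Sum>s\<le>b. c^b * (p * real b)^t)"
  proof (rule sum_mono)
    fix s assume "s \<in> {..b}"
    then have sb: "s \<le> b" by simp
    have "c^s \<le> c^b" using assms sb by (intro power_increasing) auto
    moreover have "(p * real s)^t \<le> (p * real b)^t"
      using assms sb by (intro power_mono mult_left_mono) auto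
    ultimately show "c^s * (p * real s)^t \<le> c^b * (p * real b)^t"
      using assms by (intro mult_mono) auto
  qed
  also have "\<dots> = (real b + 1) * c^b * (p * real b)^t" by simp
  finally show ?thesis .
qed

lemma analytic:
  fixes n k t b :: nat and \<alpha> \<beta> :: real
  defines "L \<equiv> ln (real n)"
  defines "LL \<equiv> ln (ln (real n))"
  defines "p \<equiv> (ln (real n) + (real k + 1) * ln (ln (real n)) - ln (ln (ln (real n)))) / real n"
  defines "B \<equiv> \<alpha> * real t * (ln (real n) / ln (ln (real n)))"
  assumes t1: "t \<ge> 1" and a0: "0 < \<alpha>" and ab: "\<alpha> < \<beta>" and n0: "n > 0"
    and LL1: "1 \<le> LL" and L1: "1 \<le> L"
    and E2: "\<alpha> * ln (exp 2 * (real k + 2)) \<le> (\<beta> - \<alpha>) * LL"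
    and E3: "(real k + 2) * L / real n \<le> 1"
    and E4: "(real k + 2) * \<alpha> * real t * L^2 * real n powr (\<beta> - 1) \<le> 1"
    and bB: "real b \<le> B"
  shows "0 \<le> p \<and> p \<le> 1 \<and> 1 \<le> exp 2 * real n * p \<and> (real b + 1) * (exp 2 * real n * p)^b * (p * real b)^t
          \<le> (\<alpha> * real t + 1) * ((real k + 2) * \<alpha> * real t) * L^3 * real n powr (\<beta> - 1)"
proof -
  have nr: "real n > 0" using n0 by simp
  have LLL: "LL = ln L" unfolding LL_def L_def ..
  have LLleL: "LL \<le> L" unfolding LLL using ln_le_minus_one[of L] L1 by linarith
  have lnLL0: "0 \<le> ln LL" using LL1 by simp
  have lnLL: "ln LL \<le> LL" using ln_le_minus_one[of LL] LL1 by linarith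
  define np where "np = L + (real k + 1) * LL - ln LL"
  have pnp: "p = np / real n" unfolding p_def np_def L_def LL_def by simp
  have kLL: "(real k + 1) * LL \<ge> 1 * LL" using LL1 by (intro mult_right_mono) auto
  have np1: "np \<ge> L" unfolding np_def using lnLL kLL by linarith
  have kL: "(real k + 1) * LL \<le> (real k + 1) * L" using LLleL by (intro mult_left_mono) auto
  have np2: "np \<le> (real k + 2) * L" unfolding np_def using lnLL0 kL by (simp add: algebra_simps)
  have p0: "0 \<le> p" unfolding pnp using np1 L1 nr by simp
  have p1: "p \<le> 1"
  proof -
    have "np / real n \<le> (real k + 2) * L / real n" using np2 nr by (intro divide_right_mono) auto
    then show ?thesis unfolding pnp using E3 by linarith
  qed
  have BL: "B = \<alpha> * real t * L / LL" unfolding B_def L_def LL_def by simp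
  have B0: "0 \<le> B" unfolding BL using a0 L1 LL1 by simp
  have BtL: "B \<le> \<alpha> * real t * L" unfolding BL
    using divide_left_mono[of 1 LL "\<alpha> * real t * L"] LL1 a0 L1 by simp
  define c where "c = exp 2 * real n * p"
  have cnp: "c = exp 2 * np" unfolding c_def pnp using nr by simp
  have c1: "1 \<le> c"
  proof -
    have "1 * 1 \<le> exp 2 * np" using np1 L1 by (intro mult_mono) auto
    then show ?thesis unfolding cnp by simp
  qed
  define K where "K = exp 2 * (real k + 2)"
  have K0: "K > 0" unfolding K_def by simp
  have cK: "c \<le> K * L" unfolding cnp K_def using np2 by simp
  have lnc: "ln c \<le> ln K + LL"
  proof -
    have "ln c \<le> ln (K * L)" using cK c1 by simp
    also have "\<dots> = ln K + LL" unfolding LLL using K0 L1 by (simp add: ln_mult)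
    finally show ?thesis .
  qed
  have Blnc: "B * ln c \<le> \<beta> * real t * L"
  proof -
    have "B * ln c \<le> B * (ln K + LL)" using lnc B0 by (rule mult_left_mono)
    also have "\<dots> = real t * L * (\<alpha> * (ln K + LL) / LL)" unfolding BL using LL1 by (simp add: field_simps)
    also have "\<dots> \<le> real t * L * \<beta>"
    proof (rule mult_left_mono)
      have "\<alpha> * (ln K + LL) \<le> \<beta> * LL" using E2 unfolding K_def by (simp add: algebra_simps)
      then show "\<alpha> * (ln K + LL) / LL \<le> \<beta>" using LL1 by (simp add: divide_le_eq)
      show "0 \<le> real t * L" using L1 by simp
    qed
    finally show ?thesis by (simp add: algebra_simps)
  qed
  have cb: "c ^ b \<le> (real n powr \<beta>) ^ t"
  proof -
    have "c ^ b = c powr real b" using c1 by (simp add: powr_realpow)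
    also have "\<dots> \<le> c powr B" using c1 bB by (intro powr_mono) auto
    also have "\<dots> = exp (B * ln c)" using c1 by (simp add: powr_def)
    also have "\<dots> \<le> exp (\<beta> * real t * L)" using Blnc by simp
    also have "\<dots> = (real n powr \<beta>) ^ t"
      unfolding L_def using nr by (simp add: powr_def exp_of_nat_mult[symmetric] algebra_simps)
    finally show ?thesis .
  qed
  define M where "M = (real k + 2) * \<alpha> * real t"
  have M0: "0 \<le> M" unfolding M_def using a0 by simp
  have pb: "(p * real b)^t \<le> (M * L^2 / real n)^t"
  proof (rule power_mono)
    have "p * real b \<le> p * B" using bB p0 by (rule mult_left_mono)
    also have "\<dots> \<le> ((real k + 2) * L / real n) * (\<alpha> * real t * L)"
    proof (rule mult_mono)
      show "p \<le> (real k + 2) * L / real n" unfolding pnp using np2 nr by (simp add: divide_right_mono)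
      show "B \<le> \<alpha> * real t * L" by (rule BtL)
      show "0 \<le> (real k + 2) * L / real n" using L1 nr by simp
      show "0 \<le> B" by (rule B0)
    qed
    also have "\<dots> = M * L^2 / real n" unfolding M_def by (simp add: power2_eq_square)
    finally show "p * real b \<le> M * L^2 / real n" .
    show "0 \<le> p * real b" using p0 by simp
  qed
  have b1: "real b + 1 \<le> (\<alpha> * real t + 1) * L"
  proof -
    have "B \<le> \<alpha> * real t * L" by (rule BtL)
    moreover have "(\<alpha> * real t + 1) * L = \<alpha> * real t * L + L" by (simp add: algebra_simps)
    ultimately show ?thesis using bB L1 by linarith
  qed
  define x where "x = M * L^2 * real n powr (\<beta> - 1)"
  have x0: "0 \<le> x" unfolding x_def using M0 by simp
  have x1: "x \<le> 1" unfolding x_def M_def using E4 by simp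
  have xt: "x ^ t \<le> x" using x0 x1 t1 by (metis power_decreasing power_one_right)
  have prod: "(real n powr \<beta>) ^ t * (M * L^2 / real n)^t = x ^ t"
  proof -
    have "real n powr \<beta> * (M * L^2 / real n) = x"
      unfolding x_def using nr by (simp add: powr_diff field_simps)
    then show ?thesis by (simp add: power_mult_distrib[symmetric])
  qed
  have "(real b + 1) * c^b * (p * real b)^t \<le> ((\<alpha> * real t + 1) * L) * ((real n powr \<beta>) ^ t * (M * L^2 / real n)^t)"
  proof -
    have "(real b + 1) * c^b * (p * real b)^t = (real b + 1) * (c^b * (p * real b)^t)" by simp
    also have "\<dots> \<le> ((\<alpha> * real t + 1) * L) * ((real n powr \<beta>) ^ t * (M * L^2 / real n)^t)"
      using b1 cb pb p0 c1 by (intro mult_mono) auto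
    finally show ?thesis .
  qed
  also have "\<dots> \<le> ((\<alpha> * real t + 1) * L) * x" unfolding prod
    using xt L1 a0 by (intro mult_left_mono) auto
  also have "\<dots> = (\<alpha> * real t + 1) * ((real k + 2) * \<alpha> * real t) * L^3 * real n powr (\<beta> - 1)"
    unfolding x_def M_def by (simp add: power2_eq_square power3_eq_cube algebra_simps)
  finally show ?thesis using p0 p1 c1 unfolding c_def L_def by simp
qed

lemma aux_lim: "\<epsilon> > 0 \<Longrightarrow> (\<lambda>n::nat. ln (real n) ^ 3 * real n powr (-\<epsilon>)) \<longlonglongrightarrow> 0"
  by real_asymp

lemma aux_lim2: "\<epsilon> > 0 \<Longrightarrow> (\<lambda>n::nat. ln (real n) ^ 2 * real n powr (-\<epsilon>)) \<longlonglongrightarrow> 0"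
  by real_asymp

lemma aux_lim3: "(\<lambda>n::nat. ln (real n) / real n) \<longlonglongrightarrow> 0"
  by real_asymp

lemma aux_lim4: "filterlim (\<lambda>n::nat. ln (ln (real n))) at_top sequentially"
  by real_asymp

lemma aux_lim5: "filterlim (\<lambda>n::nat. ln (real n)) at_top sequentially"
  by real_asymp

theorem lemma5:
  fixes k t :: nat and \<alpha> :: real
  assumes "k \<ge> 1" and "t \<ge> 1" and "0 < \<alpha>" and "\<alpha> < 1"
  shows "(\<lambda>n. Gnp_prob n
            ((ln (real n) + (real k + 1) * ln (ln (real n)) - ln (ln (ln (real n)))) / real n)
            (\<lambda>E. \<exists>S. S \<subseteq> {0..<n} \<and>
                 real (card S) \<le> \<alpha> * real t * (ln (real n) / ln (ln (real n))) \<and>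
                 induced_edges E S \<ge> card S + t))
         \<longlonglongrightarrow> 0"
proof -
  note t1 = assms(2) and a0 = assms(3) and a1 = assms(4)
  define \<beta> where "\<beta> = (1 + \<alpha>) / 2"
  have ab: "\<alpha> < \<beta>" and b1: "\<beta> < 1" unfolding \<beta>_def using a1 by auto
  define K where "K = exp 2 * (real k + 2)"
  define C1 where "C1 = (\<alpha> * real t + 1) * ((real k + 2) * \<alpha> * real t)"
  define h where "h n = C1 * (ln (real n) ^ 3 * real n powr (\<beta> - 1))" for n :: nat
  define P where "P n = ((ln (real n) + (real k + 1) * ln (ln (real n)) - ln (ln (ln (real n)))) / real n)" for n :: nat
  define B where "B n = \<alpha> * real t * (ln (real n) / ln (ln (real n)))" for n :: nat
  define G where "G n = Gnp_prob n (P n) (\<lambda>E. \<exists>S. S \<subseteq> {0..<n} \<and> real (card S) \<le> B n \<and> induced_edges E S \<ge> card S + t)" for n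
  have h0: "h \<longlonglongrightarrow> 0"
  proof -
    have "(\<lambda>n::nat. ln (real n) ^ 3 * real n powr (-(1 - \<beta>))) \<longlonglongrightarrow> 0"
      using b1 by (intro aux_lim) simp
    then have "(\<lambda>n::nat. C1 * (ln (real n) ^ 3 * real n powr (\<beta> - 1))) \<longlonglongrightarrow> C1 * 0"
      by (intro tendsto_mult_left) simp
    then show ?thesis unfolding h_def by simp
  qed
  have ev1: "\<forall>\<^sub>F n in sequentially. n > 0" by (rule eventually_gt_at_top)
  have ev2: "\<forall>\<^sub>F n in sequentially. 1 \<le> ln (ln (real n))"
    using aux_lim4 unfolding filterlim_at_top by blast
  have ev3: "\<forall>\<^sub>F n in sequentially. 1 \<le> ln (real n)"
    using aux_lim5 unfolding filterlim_at_top by blast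
  have ev4: "\<forall>\<^sub>F n in sequentially. \<alpha> * ln K \<le> (\<beta> - \<alpha>) * ln (ln (real n))"
  proof -
    have "\<forall>\<^sub>F n in sequentially. \<alpha> * ln K / (\<beta> - \<alpha>) \<le> ln (ln (real n))"
      using aux_lim4 unfolding filterlim_at_top by blast
    then show ?thesis
      by eventually_elim (use ab in \<open>simp add: pos_divide_le_eq mult.commute\<close>)
  qed
  have ev5: "\<forall>\<^sub>F n in sequentially. (real k + 2) * ln (real n) / real n \<le> 1"
  proof -
    have "(\<lambda>n::nat. (real k + 2) * (ln (real n) / real n)) \<longlonglongrightarrow> (real k + 2) * 0"
      by (intro tendsto_mult_left aux_lim3)
    then have "\<forall>\<^sub>F n in sequentially. (real k + 2) * (ln (real n) / real n) < 1"
      by (intro order_tendstoD(2)) auto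
    then show ?thesis by eventually_elim simp
  qed
  have ev6: "\<forall>\<^sub>F n in sequentially. (real k + 2) * \<alpha> * real t * (ln (real n))^2 * real n powr (\<beta> - 1) \<le> 1"
  proof -
    have "(\<lambda>n::nat. ln (real n) ^ 2 * real n powr (-(1 - \<beta>))) \<longlonglongrightarrow> 0"
      using b1 by (intro aux_lim2) simp
    then have "(\<lambda>n::nat. ((real k + 2) * \<alpha> * real t) * (ln (real n) ^ 2 * real n powr (-(1 - \<beta>)))) \<longlonglongrightarrow> ((real k + 2) * \<alpha> * real t) * 0"
      by (intro tendsto_mult_left)
    then have "\<forall>\<^sub>F n in sequentially. ((real k + 2) * \<alpha> * real t) * (ln (real n) ^ 2 * real n powr (-(1 - \<beta>))) < 1"
      by (intro order_tendstoD(2)) auto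
    then show ?thesis by eventually_elim (simp add: algebra_simps)
  qed
  have main: "\<forall>\<^sub>F n in sequentially. 0 \<le> G n \<and> G n \<le> h n"
    using ev1 ev2 ev3 ev4 ev5 ev6
  proof eventually_elim
    case (elim n)
    define b where "b = nat \<lfloor>B n\<rfloor>"
    have B0: "0 \<le> B n" unfolding B_def using elim a0 by simp
    have bB: "real b \<le> B n" unfolding b_def using B0 by simp
    have A: "0 \<le> P n \<and> P n \<le> 1 \<and> 1 \<le> exp 2 * real n * P n \<and> (real b + 1) * (exp 2 * real n * P n)^b * (P n * real b)^t
          \<le> (\<alpha> * real t + 1) * ((real k + 2) * \<alpha> * real t) * (ln (real n))^3 * real n powr (\<beta> - 1)"
      unfolding P_def
      by (rule analytic[OF t1 a0 ab]) (use elim bB in \<open>simp_all add: K_def B_def\<close>)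
    have "G n \<le> (\<Sum>s\<le>b. real (n choose s) * real ((s*s) choose (s+t)) * P n^(s+t))"
      unfolding G_def b_def using comb_bound[of "P n" "B n" n t] A B0 by simp
    also have "\<dots> \<le> (\<Sum>s\<le>b. (exp 2 * real n * P n)^s * (P n * real s)^t)"
      by (rule sum_mono) (use A term_bound in auto)
    also have "\<dots> \<le> (real b + 1) * (exp 2 * real n * P n)^b * (P n * real b)^t"
      using A by (intro sum_geo_bound) auto
    also have "\<dots> \<le> h n" using A unfolding h_def C1_def by (simp add: algebra_simps)
    finally have "G n \<le> h n" .
    moreover have "0 \<le> G n" unfolding G_def using A by (intro gnp_nonneg) auto
    ultimately show ?case by simp
  qed
  have "G \<longlonglongrightarrow> 0"
  proof (rule tendsto_sandwich[OF _ _ tendsto_const h0])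
    show "\<forall>\<^sub>F n in sequentially. 0 \<le> G n" using main by eventually_elim simp
    show "\<forall>\<^sub>F n in sequentially. G n \<le> h n" using main by eventually_elim simp
  qed
  then show ?thesis unfolding G_def P_def B_def .
qed

end
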